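(* For $1\le\ell\le r$ let \[ F_\ell(n)=z_\ell^n\prod_{\nu=1}^{m_\ell}P_{\ell,\nu}(n)^{q_{\ell,\nu}}\prod_{j=1}^{h_\ell}\mathcal H_{\alpha_{\ell,j}}(n)^{e_{\ell,j}}, \] where $P_{\ell,\nu}\in\mathbb C[x]$, $z_\ell,q_{\ell,\nu}\in\mathbb C$, $e_{\ell,j}\in\mathbb Z_{\ge0}$ and $\alpha_{\ell,j}$ are words. Assume no polynomial factor vanishes on the relevant positive integers, and fix branches for the complex powers. Then for every positive integer $k$, \[ T_r(k)=\sum_{n_r=1}^{k}\sum_{n_{r-1}=1}^{n_r}\cdots\sum_{n_1=1}^{n_2}\prod_{\ell=1}^{r}F_\ell(n_\ell)\in\operatorname{span}_{\mathbb C}\{\mathcal P_\Omega(k)\}_\Omega, \] where $\Omega$ ranges over words in polynomial letters.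
   Context: A letter is a pair $(r,s)\in\mathbb C^2$, a word is a finite sequence of letters, and for $\alpha=((r_1,s_1),\ldots,(r_d,s_d))$, $\mathcal H_{\alpha}(N)=\sum_{N\ge n_1>\cdots>n_d\ge1}\prod_{i}s_i^{n_i}n_i^{-r_i}$, $\mathcal H_\emptyset(N)=1$ ($n^r=\exp(r\log n)$). A polynomial letter is a triple $L=(\boldsymbol\rho,\sigma,\mathbf P)$ with $\boldsymbol\rho=(\rho_1,\ldots,\rho_t)\in\mathbb C^t$, $\sigma\in\mathbb C$, $\mathbf P=(P_1,\ldots,P_t)$, $P_\nu\in\mathbb C[x]$; its value is $L(n)=\sigma^n\prod_\nu P_\nu(n)^{-\rho_\nu}$ (branches fixed). For a word $\Omega=(L_1,\ldots,L_d)$ of polynomial letters, $\mathcal P_\Omega(N)=\sum_{N\ge n_1>\cdots>n_d\ge1}\prod_jL_j(n_j)$, $\mathcal P_\emptyset(N)=1$. *)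

theory Defs
  imports "HOL-Analysis.Analysis" "HOL-Computational_Algebra.Polynomial"
begin

type_synonym letter = "complex \<times> complex"
type_synonym word = "letter list"

fun Hsum :: "word \<Rightarrow> nat \<Rightarrow> complex" where
  "Hsum [] N = 1"
| "Hsum ((r, s) # a) N =
     (\<Sum>n = 1..N. s ^ n * exp (- r * of_real (ln (real n))) * Hsum a (n - 1))"

text \<open>A branch of log is parametrised by c: lg_c(w) = Ln(w * exp(-c)) + c
  (the principal branch rotated/shifted; c = 0 is the principal branch).\<close>
definition bpow :: "complex \<Rightarrow> complex \<Rightarrow> complex \<Rightarrow> complex" where
  "bpow c w q = exp (q * (Ln (w * exp (- c)) + c))"

text \<open>Polynomial letter (rho, sigma, P) with fixed branches: sigma together with
  a list of factors (rho_nu, P_nu, branch parameter c_nu).\<close>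
type_synonym pletter = "complex \<times> (complex \<times> complex poly \<times> complex) list"
type_synonym pword = "pletter list"

definition plval :: "pletter \<Rightarrow> nat \<Rightarrow> complex" where
  "plval L n = (fst L) ^ n *
     (\<Prod>(\<rho>, P, c) \<leftarrow> snd L. bpow c (poly P (of_nat n)) (- \<rho>))"

fun Psum :: "pword \<Rightarrow> nat \<Rightarrow> complex" where
  "Psum [] N = 1"
| "Psum (L # \<Omega>) N = (\<Sum>n = 1..N. plval L n * Psum \<Omega> (n - 1))"

text \<open>Data of one factor F_l: (z, [(P, q, c)], [(alpha, e)]).\<close>
type_synonym fdata =
  "complex \<times> (complex poly \<times> complex \<times> complex) list \<times> (word \<times> nat) list"

definition Fval :: "fdata \<Rightarrow> nat \<Rightarrow> complex" where
  "Fval D n = (fst D) ^ n *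
     (\<Prod>(P, q, c) \<leftarrow> fst (snd D). bpow c (poly P (of_nat n)) q) *
     (\<Prod>(a, e) \<leftarrow> snd (snd D). Hsum a n ^ e)"

fun Tsum :: "(nat \<Rightarrow> fdata) \<Rightarrow> nat \<Rightarrow> nat \<Rightarrow> complex" where
  "Tsum F 0 k = 1"
| "Tsum F (Suc l) k = (\<Sum>n = 1..k. Fval (F (Suc l)) n * Tsum F l n)"

end

theory Submission
  imports Defs
begin

definition lc :: "(complex \<times> pword) list \<Rightarrow> nat \<Rightarrow> complex" where
  "lc cs N = (\<Sum>(a, \<Omega>) \<leftarrow> cs. a * Psum \<Omega> N)"

definition insp :: "(nat \<Rightarrow> complex) \<Rightarrow> bool" where
  "insp f \<longleftrightarrow> (\<exists>cs. \<forall>N. f N = lc cs N)"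

definition lmul :: "pletter \<Rightarrow> pletter \<Rightarrow> pletter" where
  "lmul L L' = (fst L * fst L', snd L @ snd L')"

lemma plval_lmul: "plval (lmul L L') n = plval L n * plval L' n"
  by (simp add: plval_def lmul_def power_mult_distrib)

lemma lc_Nil [simp]: "lc [] N = 0" by (simp add: lc_def)
lemma lc_Cons [simp]: "lc ((a, \<Omega>) # cs) N = a * Psum \<Omega> N + lc cs N" by (simp add: lc_def)
lemma lc_append [simp]: "lc (xs @ ys) N = lc xs N + lc ys N" by (simp add: lc_def)

lemma lc_scale: "lc (map (\<lambda>(a, \<Omega>). (c * a, \<Omega>)) cs) N = c * lc cs N"
  by (induction cs) (auto simp: algebra_simps)

definition pre :: "pletter \<Rightarrow> (complex \<times> pword) list \<Rightarrow> (complex \<times> pword) list" where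
  "pre L cs = map (\<lambda>(a, \<Omega>). (a, L # \<Omega>)) cs"

lemma lc_pre: "lc (pre L cs) N = (\<Sum>n = 1..N. plval L n * lc cs (n - 1))"
proof (induction cs)
  case Nil then show ?case by (simp add: pre_def)
next
  case (Cons x cs)
  obtain a \<Omega> where x: "x = (a, \<Omega>)" by fastforce
  have "lc (pre L (x # cs)) N = a * Psum (L # \<Omega>) N + lc (pre L cs) N"
    by (simp add: pre_def x)
  also have "\<dots> = (\<Sum>n = 1..N. plval L n * lc (x # cs) (n - 1))"
    by (simp add: Cons x distrib_left sum.distrib sum_distrib_left mult.left_commute)
  finally show ?case .
qed

lemma insp_pre: "insp h \<Longrightarrow> insp (\<lambda>N. \<Sum>n = 1..N. plval L n * h (n - 1))"
  unfolding insp_def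
proof -
  assume "\<exists>cs. \<forall>N. h N = lc cs N"
  then obtain cs where "\<forall>N. h N = lc cs N" by blast
  then have "\<forall>N. (\<Sum>n = 1..N. plval L n * h (n - 1)) = lc (pre L cs) N"
    by (simp add: lc_pre)
  then show "\<exists>cs. \<forall>N. (\<Sum>n = 1..N. plval L n * h (n - 1)) = lc cs N" by blast
qed

lemma insp_add: "insp f \<Longrightarrow> insp g \<Longrightarrow> insp (\<lambda>N. f N + g N)"
  unfolding insp_def by (metis lc_append)

lemma insp_scale: "insp f \<Longrightarrow> insp (\<lambda>N. c * f N)"
  unfolding insp_def by (metis lc_scale)

lemma insp_zero: "insp (\<lambda>N. 0)"
  unfolding insp_def by (rule exI[of _ "[]"]) simp

lemma insp_one: "insp (\<lambda>N. 1)"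
  unfolding insp_def by (rule exI[of _ "[(1, [])]"]) simp

lemma insp_Psum: "insp (Psum \<Omega>)"
  unfolding insp_def by (rule exI[of _ "[(1, \<Omega>)]"]) simp

lemma Psum_step: "n \<ge> 1 \<Longrightarrow> Psum (L # A) n = Psum (L # A) (n - 1) + plval L n * Psum A (n - 1)"
  by (cases n) auto

lemma Psum_Cons_0 [simp]: "Psum (L # A) 0 = 0" by simp
lemma Psum_Cons_Suc [simp]: "Psum (L # A) (Suc N) = Psum (L # A) N + plval L (Suc N) * Psum A N"
  by simp
declare Psum.simps(2) [simp del]

lemma psum_prod_identity:
  "Psum (L # A) N * Psum (L' # B) N =
   (\<Sum>n = 1..N. plval L n * (Psum A (n - 1) * Psum (L' # B) (n - 1))
              + plval L' n * (Psum (L # A) (n - 1) * Psum B (n - 1))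
              + plval (lmul L L') n * (Psum A (n - 1) * Psum B (n - 1)))"
proof (induction N)
  case 0 then show ?case by simp
next
  case (Suc N)
  have "Psum (L # A) (Suc N) * Psum (L' # B) (Suc N) = Psum (L # A) N * Psum (L' # B) N
     + (plval L (Suc N) * (Psum A N * Psum (L' # B) N)
              + plval L' (Suc N) * (Psum (L # A) N * Psum B N)
              + plval (lmul L L') (Suc N) * (Psum A N * Psum B N))"
    by (simp add: plval_lmul algebra_simps)
  then show ?case using Suc.IH by (simp add: sum.cl_ivl_Suc)
qed

lemma insp_psum_prod: "insp (\<lambda>N. Psum \<Omega> N * Psum \<Omega>' N)"
proof (induction \<Omega> arbitrary: \<Omega>')
  case Nil then show ?case by (simp add: insp_Psum)
next
  case (Cons L A)
  note outer = Cons.IH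
  show ?case
  proof (induction \<Omega>')
    case Nil then show ?case using insp_Psum[of "L # A"] by simp
  next
    case (Cons L' B)
    have h1: "insp (\<lambda>N. \<Sum>n = 1..N. plval L n * (Psum A (n - 1) * Psum (L' # B) (n - 1)))"
      using insp_pre[OF outer[of "L' # B"]] .
    have h2: "insp (\<lambda>N. \<Sum>n = 1..N. plval L' n * (Psum (L # A) (n - 1) * Psum B (n - 1)))"
      using insp_pre[OF Cons.IH] .
    have h3: "insp (\<lambda>N. \<Sum>n = 1..N. plval (lmul L L') n * (Psum A (n - 1) * Psum B (n - 1)))"
      using insp_pre[OF outer[of B]] .
    show ?case
      unfolding psum_prod_identity sum.distrib
      by (intro insp_add h1 h2 h3)
  qed
qed

lemma insp_lc_mult_psum: "insp (\<lambda>N. Psum \<Omega> N * lc ds N)"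
proof (induction ds)
  case Nil then show ?case by (simp add: insp_zero)
next
  case (Cons x ds)
  obtain a \<Omega>' where x: "x = (a, \<Omega>')" by fastforce
  have "insp (\<lambda>N. a * (Psum \<Omega> N * Psum \<Omega>' N) + Psum \<Omega> N * lc ds N)"
    by (intro insp_add insp_scale insp_psum_prod Cons)
  then show ?case by (simp add: x algebra_simps)
qed

lemma insp_lc_mult: "insp (\<lambda>N. lc cs N * lc ds N)"
proof (induction cs)
  case Nil then show ?case by (simp add: insp_zero)
next
  case (Cons x cs)
  obtain a \<Omega> where x: "x = (a, \<Omega>)" by fastforce
  have "insp (\<lambda>N. a * (Psum \<Omega> N * lc ds N) + lc cs N * lc ds N)"
    by (intro insp_add insp_scale insp_lc_mult_psum Cons)
  then show ?case by (simp add: x algebra_simps)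
qed

lemma insp_mult: "insp f \<Longrightarrow> insp g \<Longrightarrow> insp (\<lambda>N. f N * g N)"
proof -
  assume "insp f" "insp g"
  then obtain cs ds where "\<forall>N. f N = lc cs N" "\<forall>N. g N = lc ds N"
    unfolding insp_def by blast
  then show ?thesis using insp_lc_mult[of cs ds] by simp
qed

fun nsl :: "pletter \<Rightarrow> complex \<times> pword \<Rightarrow> (complex \<times> pword) list" where
  "nsl L (a, []) = [(a, [L])]"
| "nsl L (a, L' # A) = [(a, L # L' # A), (a, lmul L L' # A)]"

lemma lc_nsl: "lc (nsl L x) N = (\<Sum>n = 1..N. plval L n * (fst x * Psum (snd x) n))"
proof (cases x)
  case (Pair a \<Omega>)
  show ?thesis
  proof (cases \<Omega>)
    case Nil then show ?thesis by (simp add: Pair Psum.simps sum_distrib_left mult.commute)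
  next
    case (Cons L' A)
    have "(\<Sum>n = 1..N. plval L n * (a * Psum (L' # A) n)) =
          (\<Sum>n = 1..N. a * (plval L n * Psum (L' # A) (n - 1)) +
                       a * (plval (lmul L L') n * Psum A (n - 1)))"
      by (intro sum.cong refl) (simp add: Psum_step plval_lmul algebra_simps)
    then show ?thesis
      by (simp add: Pair Cons sum.distrib sum_distrib_left Psum.simps(2)[of L "L' # A"]
          Psum.simps(2)[of "lmul L L'" A])
  qed
qed

lemma lc_nsl_concat: "lc (concat (map (nsl L) cs)) N = (\<Sum>n = 1..N. plval L n * lc cs n)"
proof (induction cs)
  case Nil then show ?case by simp
next
  case (Cons x cs)
  obtain a \<Omega> where x: "x = (a, \<Omega>)" by fastforce
  show ?case using lc_nsl[of L x N]
    by (simp add: Cons x distrib_left sum.distrib)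
qed

lemma insp_sum_ns: "insp h \<Longrightarrow> insp (\<lambda>N. \<Sum>n = 1..N. plval L n * h n)"
proof -
  assume "insp h"
  then obtain cs where "\<forall>N. h N = lc cs N" unfolding insp_def by blast
  then have "\<forall>N. (\<Sum>n = 1..N. plval L n * h n) = lc (concat (map (nsl L) cs)) N"
    by (simp add: lc_nsl_concat)
  then show ?thesis unfolding insp_def by blast
qed

definition hconv :: "letter \<Rightarrow> pletter" where
  "hconv x = (snd x, [(fst x, [:0, 1:], 0)])"

lemma hconv_pair: "hconv (r, s) = (s, [(r, [:0, 1:], 0)])" by (simp add: hconv_def)

lemma Hsum_Psum: "Hsum a N = Psum (map hconv a) N"
proof (induction a arbitrary: N)
  case Nil then show ?case by simp
next
  case (Cons x a)
  obtain r s where x: "x = (r, s)" by fastforce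
  have "Hsum (x # a) N = (\<Sum>n = 1..N. plval (hconv x) n * Psum (map hconv a) (n - 1))"
    by (auto simp: x Cons hconv_pair plval_def bpow_def intro!: sum.cong)
  then show ?case by (simp add: Psum.simps)
qed

lemma insp_Hsum: "insp (Hsum a)"
  using insp_Psum[of "map hconv a"] by (simp add: Hsum_Psum[abs_def])

lemma insp_pow: "insp f \<Longrightarrow> insp (\<lambda>N. f N ^ e)"
  by (induction e) (simp_all add: insp_one insp_mult)

lemma insp_Hprod: "insp (\<lambda>n. \<Prod>(a, e) \<leftarrow> hs. Hsum a n ^ e)"
proof (induction hs)
  case Nil then show ?case by (simp add: insp_one)
next
  case (Cons x hs)
  obtain a e where x: "x = (a, e)" by fastforce
  show ?case using insp_mult[OF insp_pow[OF insp_Hsum[of a], of e] Cons] by (simp add: x)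
qed

lemma prod_conv: "(\<Prod>(\<rho>, P, c) \<leftarrow> map (\<lambda>(P, q, c). (- q, P, c)) xs. bpow c (poly P x) (- \<rho>))
   = (\<Prod>(P, q, c) \<leftarrow> xs. bpow c (poly P x) q)"
  by (induction xs) auto

lemma Fval_split:
  "Fval D n = plval (fst D, map (\<lambda>(P, q, c). (- q, P, c)) (fst (snd D))) n *
     (\<Prod>(a, e) \<leftarrow> snd (snd D). Hsum a n ^ e)"
  unfolding Fval_def plval_def
  by (simp only: prod_conv fst_conv snd_conv)

lemma insp_Tsum: "insp (Tsum F l)"
proof (induction l)
  case 0 then show ?case using insp_one by (simp add: insp_def)
next
  case (Suc l)
  have "insp (\<lambda>N. \<Sum>n = 1..N. plval (fst (F (Suc l)),
        map (\<lambda>(P, q, c). (- q, P, c)) (fst (snd (F (Suc l))))) n *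
        ((\<Prod>(a, e) \<leftarrow> snd (snd (F (Suc l))). Hsum a n ^ e) * Tsum F l n))"
    by (intro insp_sum_ns insp_mult insp_Hprod Suc)
  then show ?case by (simp add: Fval_split mult.assoc)
qed

theorem theorem7p4:
  fixes r :: nat and F :: "nat \<Rightarrow> fdata"
  assumes "r \<ge> 1"
    and "\<forall>l \<in> {1..r}. \<forall>(P, q, c) \<in> set (fst (snd (F l))).
           \<forall>n::nat \<ge> 1. poly P (of_nat n) \<noteq> 0"
  shows "\<exists>cs :: (complex \<times> pword) list. \<forall>k::nat \<ge> 1.
           Tsum F r k = (\<Sum>(a, \<Omega>) \<leftarrow> cs. a * Psum \<Omega> k)"
  using insp_Tsum[of F r] unfolding insp_def lc_def by blast

end
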